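(* Let $i,j$ be positive integers and let $w,s\in\{0,1\}^*$ be $\frac{7}{3}$-power-free words such that $|w|=2^{i+1}-1$ or $|w|=3\cdot 2^i-1$, and $|s|=2^{j+1}-1$ or $|s|=3\cdot 2^j-1$. Assume also that $|s|\geq|w|$. Let $a\in\{0,1\}$. Then the word $sawawas$ contains a $\frac{7}{3}$-power (i.e., is not $\frac{7}{3}$-power-free).
   Context: A word $w'$ is a subword of $w$ if $w=uw'v$ for some words $u,v$. For a rational $\alpha\ge 1$, an $\alpha$-power is a word of the form $x^nx'$ with $x$ a nonempty word, $x'$ a prefix of $x$, $n$ a nonnegative integer and $n+|x'|/|x|=\alpha$. A word is $\alpha$-power-free if none of its subwords is a $\beta$-power for any rational $\beta\geq\alpha$; otherwise it contains an $\alpha$-power. *)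

theory Defs
  imports Complex_Main "HOL-Library.Sublist"
begin

(* Binary words over {0,1} are represented as lists of booleans. *)

definition is_power :: "rat \<Rightarrow> 'a list \<Rightarrow> bool" where
  "is_power \<beta> y \<longleftrightarrow> (\<exists>x x' n. x \<noteq> [] \<and> prefix x' x \<and>
      y = concat (replicate n x) @ x' \<and>
      of_nat n + of_nat (length x') / of_nat (length x) = \<beta>)"

definition power_free :: "rat \<Rightarrow> 'a list \<Rightarrow> bool" where
  "power_free \<alpha> w \<longleftrightarrow> \<not> (\<exists>y \<beta>. sublist y w \<and> \<beta> \<ge> \<alpha> \<and> is_power \<beta> y)"

end

theory Submission
  imports Defs
begin


definition badI :: "bool list \<Rightarrow> bool" where
  "badI X \<longleftrightarrow> (\<exists>i l q. 0 < q \<and> 7*q \<le> 3*l \<and> i + l \<le> length X \<and>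
     (\<forall>k. k + q < l \<longrightarrow> X!(i+k) = X!(i+k+q)))"

lemma concat_rep_nth:
  assumes "length x = q" "0 < q" "k < n*q"
  shows "concat (replicate n x) ! k = x ! (k mod q)"
  using assms(3)
proof (induction n arbitrary: k)
  case 0 then show ?case by simp
next
  case (Suc n)
  show ?case
  proof (cases "k < q")
    case True then show ?thesis using assms by (simp add: nth_append)
  next
    case False
    then have "k - q < n*q" using Suc.prems by auto
    then have "concat (replicate n x) ! (k-q) = x ! ((k-q) mod q)" using Suc.IH by blast
    moreover have "(k-q) mod q = k mod q" using False by (simp add: mod_if)
    ultimately show ?thesis using False assms by (simp add: nth_append)
  qed
qed

lemma periodic_mod:
  assumes "0 < q" "\<forall>k. k + q < l \<longrightarrow> y!k = y!(k+q)" "k < l"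
  shows "y ! k = y ! (k mod q)"
  using assms(3)
proof (induction k rule: less_induct)
  case (less k)
  show ?case
  proof (cases "k < q")
    case True then show ?thesis by simp
  next
    case False
    then have "y!(k-q) = y!k" using assms(2)[rule_format, of "k-q"] less.prems by simp
    moreover have "y!(k-q) = y!((k-q) mod q)" using less.IH[of "k-q"] less.prems assms(1) False by simp
    moreover have "(k-q) mod q = k mod q" using False by (simp add: mod_if)
    ultimately show ?thesis by simp
  qed
qed

lemma badI_not_free:
  assumes "badI X" shows "\<not> power_free (7/3) X"
proof -
  obtain i l q where q: "0 < q" "7*q \<le> 3*l" "i + l \<le> length X"
     and per: "\<forall>k. k + q < l \<longrightarrow> X!(i+k) = X!(i+k+q)"
    using assms unfolding badI_def by blast
  define y where "y = take l (drop i X)"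
  have ly: "length y = l" using q by (simp add: y_def)
  have yper: "\<forall>k. k + q < l \<longrightarrow> y!k = y!(k+q)"
    using per q by (simp add: y_def add.assoc)
  have ql: "q \<le> l" using q by linarith
  define x where "x = take q y"
  define n where "n = l div q"
  define x' where "x' = take (l mod q) x"
  have lx: "length x = q" using ql ly by (simp add: x_def)
  have lx': "length x' = l mod q" using lx q by (simp add: x'_def)
  have ynq: "y = concat (replicate n x) @ x'"
  proof (rule nth_equalityI)
    show "length y = length (concat (replicate n x) @ x')"
      using ly lx lx' by (simp add: length_concat sum_list_replicate n_def)
  next
    fix k assume "k < length y"
    then have k: "k < l" using ly by simp
    have lc: "length (concat (replicate n x)) = n*q" using lx by (simp add: length_concat sum_list_replicate)
    show "y ! k = (concat (replicate n x) @ x') ! k"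
    proof (cases "k < n*q")
      case True
      then have "(concat (replicate n x) @ x') ! k = x ! (k mod q)"
        using concat_rep_nth[OF lx q(1)] lc by (simp add: nth_append)
      also have "\<dots> = y ! (k mod q)" using q(1) by (simp add: x_def)
      also have "\<dots> = y ! k" using periodic_mod[OF q(1) yper k] by simp
      finally show ?thesis by simp
    next
      case False
      have lnq: "l = n*q + l mod q" by (simp add: n_def)
      have r: "k - n*q < l mod q" using k lnq False by linarith
      have r2: "l mod q < q" using q(1) by simp
      have "k = (k - n*q) + n*q" using False by simp
      then have "k mod q = (k - n*q) mod q" by (metis mod_mult_self1)
      then have km: "k - n*q = k mod q" using r r2 by simp
      have "k mod q < l mod q" using r km by simp
      then have "(concat (replicate n x) @ x') ! k = x ! (k mod q)"
        using False lc km by (simp add: nth_append x'_def)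
      also have "\<dots> = y ! (k mod q)" using q(1) by (simp add: x_def)
      also have "\<dots> = y ! k" using periodic_mod[OF q(1) yper k] by simp
      finally show ?thesis by simp
    qed
  qed
  have sub: "sublist y X" unfolding y_def
    by (metis append_take_drop_id sublist_appendI)
  have xne: "x \<noteq> []" using lx q by auto
  have pre: "prefix x' x" by (simp add: x'_def take_is_prefix)
  define \<beta> :: rat where "\<beta> = of_nat n + of_nat (length x') / of_nat (length x)"
  have lnq: "l = n*q + l mod q" by (simp add: n_def)
  have b: "\<beta> = of_nat l / of_nat q"
  proof -
    have "(of_nat l :: rat) = of_nat n * of_nat q + of_nat (l mod q)"
      using lnq by (metis of_nat_add of_nat_mult)
    then show ?thesis using q(1) lx lx' by (simp add: \<beta>_def field_simps)
  qed
  have "(7::rat)/3 \<le> of_nat l / of_nat q"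
  proof -
    have "(7::rat) * of_nat q \<le> 3 * of_nat l" using q(2) by (metis of_nat_le_iff of_nat_mult of_nat_numeral)
    then show ?thesis using q(1) by (simp add: field_simps)
  qed
  then have "\<beta> \<ge> 7/3" using b by simp
  moreover have "is_power \<beta> y" unfolding is_power_def using xne pre ynq \<beta>_def by blast
  ultimately show ?thesis unfolding power_free_def using sub by blast
qed


lemma badI_intro:
  assumes "0 < q" "7*q \<le> 3*l" "i + l \<le> length X" "\<And>k. k + q < l \<Longrightarrow> X!(i+k) = X!(i+k+q)"
  shows "badI X"
  unfolding badI_def using assms by blast

lemma cube_bad:
  assumes "k < length X" "X!i = X!j" "X!j = X!k" "j = i + 1" "k = i + 2"
  shows "badI X"
proof (rule badI_intro[of 1 3 i])
  fix t :: nat assume "t + 1 < 3"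
  then have "t = 0 \<or> t = 1" by auto
  then show "X!(i+t) = X!(i+t+1)" using assms by auto
qed (use assms in auto)

lemma parity:
  assumes nb: "\<not> badI X"
  shows "1 \<le> i \<Longrightarrow> i < j \<Longrightarrow> j + 3 \<le> length X \<Longrightarrow> X!i = X!(i+1) \<Longrightarrow> X!j = X!(j+1) \<Longrightarrow> even (j - i)"
proof (induction "j - i" arbitrary: i j rule: less_induct)
  case less
  consider "j = i+1" | "j = i+2" | "j = i+3" | "j \<ge> i+4" using less.prems by linarith
  then show ?case
  proof cases
    case 1
    then show ?thesis using cube_bad[of "i+2" X i "i+1"] less.prems nb by auto
  next
    case 2 then show ?thesis by simp
  next
    case 3
    obtain i' where ii: "i = Suc i'" using less.prems(1) by (cases i) auto
    define f where "f n = X!(i'+n)" for n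
    have L: "i' + 7 \<le> length X" using less.prems 3 ii by simp
    have cf: "f n = f m \<Longrightarrow> f m = f r \<Longrightarrow> m = n+1 \<Longrightarrow> r = n+2 \<Longrightarrow> n \<le> 4 \<Longrightarrow> False" for n m r
      using cube_bad[of "i'+n+2" X "i'+n" "i'+n+1"] L nb unfolding f_def by (simp add: add.assoc)
    have e1: "f 1 = f 2" using less.prems ii unfolding f_def by (simp add: add.commute)
    have e4: "f 4 = f 5" using less.prems ii 3 unfolding f_def by (simp add: add.commute)
    have c0: "\<not> (f 0 = f 1 \<and> f 1 = f 2)" proof
      assume h: "f 0 = f 1 \<and> f 1 = f 2"
      show False by (rule cf[of 0 1 2, OF conjunct1[OF h] conjunct2[OF h]]) simp_all
    qed
    have c1: "\<not> (f 1 = f 2 \<and> f 2 = f 3)" proof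
      assume h: "f 1 = f 2 \<and> f 2 = f 3"
      show False by (rule cf[of 1 2 3, OF conjunct1[OF h] conjunct2[OF h]]) simp_all
    qed
    have c2: "\<not> (f 2 = f 3 \<and> f 3 = f 4)" proof
      assume h: "f 2 = f 3 \<and> f 3 = f 4"
      show False by (rule cf[of 2 3 4, OF conjunct1[OF h] conjunct2[OF h]]) simp_all
    qed
    have c3: "\<not> (f 3 = f 4 \<and> f 4 = f 5)" proof
      assume h: "f 3 = f 4 \<and> f 4 = f 5"
      show False by (rule cf[of 3 4 5, OF conjunct1[OF h] conjunct2[OF h]]) simp_all
    qed
    have c4: "\<not> (f 4 = f 5 \<and> f 5 = f 6)" proof
      assume h: "f 4 = f 5 \<and> f 5 = f 6"
      show False by (rule cf[of 4 5 6, OF conjunct1[OF h] conjunct2[OF h]]) simp_all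
    qed
    have d0: "f 0 \<noteq> f 1" using c0 e1 by blast
    have d3: "f 3 \<noteq> f 2" using c1 e1 by blast
    have d4: "f 4 \<noteq> f 3" using c3 e4 by blast
    have d6: "f 6 \<noteq> f 5" using c4 e4 by blast
    have w: "f 0 = f 3 \<and> f 1 = f 4 \<and> f 2 = f 5 \<and> f 3 = f 6"
      using d0 d3 d4 d6 e1 e4 by (cases "f 1"; cases "f 3"; simp)
    have "badI X"
    proof (rule badI_intro[of 3 7 "i'"])
      fix k :: nat assume "k + 3 < 7"
      then have "k = 0 \<or> k = 1 \<or> k = 2 \<or> k = 3" by auto
      then have "f k = f (k+3)" using w by (elim disjE; simp add: numeral_eq_Suc)
      then show "X!(i'+k) = X!(i'+k+3)" unfolding f_def by (simp add: add.assoc)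
    qed (use L in auto)
    then show ?thesis using nb by simp
  next
    case 4
    show ?thesis
    proof (cases "\<exists>k. i < k \<and> k < j \<and> X!k = X!(k+1)")
      case True
      then obtain k where k: "i < k" "k < j" "X!k = X!(k+1)" by blast
      have "even (k - i)" using less.hyps[of k i] less.prems k by auto
      moreover have "even (j - k)" using less.hyps[of j k] less.prems k by auto
      moreover have "j - i = (j-k)+(k-i)" using k by simp
      ultimately show ?thesis by simp
    next
      case False
      show ?thesis
      proof (cases "j = i + 4")
        case True then show ?thesis by simp
      next
        case False2: False
        have h: "\<And>t. i < t \<Longrightarrow> t < j \<Longrightarrow> X!t \<noteq> X!(t+1)" using False by blast
        define f where "f n = X!(i+1+n)" for n
        have d: "f n \<noteq> f m" if "m = n + 1" "n \<le> 3" for n m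
          using h[of "i+1+n"] that 4 False2 unfolding f_def by (simp add: add.assoc)
        have d0: "f 0 \<noteq> f 1" by (rule d) simp_all
        have d1: "f 1 \<noteq> f 2" by (rule d) simp_all
        have d2: "f 2 \<noteq> f 3" by (rule d) simp_all
        have d3: "f 3 \<noteq> f 4" by (rule d) simp_all
        have w: "f 0 = f 2 \<and> f 1 = f 3 \<and> f 2 = f 4" using d0 d1 d2 d3 by (cases "f 0"; cases "f 1"; cases "f 2"; cases "f 3"; simp)
        have "badI X"
        proof (rule badI_intro[of 2 5 "i+1"])
          fix k :: nat assume "k + 2 < 5"
          then have "k = 0 \<or> k = 1 \<or> k = 2" by auto
          then have "f k = f (k+2)" using w by (elim disjE; simp add: numeral_eq_Suc)
          then show "X!(i+1+k) = X!(i+1+k+2)" unfolding f_def by (simp add: add.assoc)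
        qed (use less.prems 4 False2 in auto)
        then show ?thesis using nb by simp
      qed
    qed
  qed
qed

lemma transfer_bad:
  assumes Y: "Y = map (\<lambda>k. X!(st+2*k)) [0..<len]" and len: "st + 2*len \<le> length X"
    and blk: "\<And>k. k < len \<Longrightarrow> X!(st+2*k) \<noteq> X!(st+2*k+1)"
    and b: "badI Y"
  shows "badI X"
proof -
  obtain i l q where q: "0 < q" "7*q \<le> 3*l" "i + l \<le> length Y"
     and per: "\<And>k. k + q < l \<Longrightarrow> Y!(i+k) = Y!(i+k+q)"
    using b unfolding badI_def by blast
  have lY: "length Y = len" using Y by simp
  show ?thesis
  proof (rule badI_intro[of "2*q" "2*l" "st + 2*i"])
    fix k assume k: "k + 2*q < 2*l"
    define k' where "k' = k div 2"
    have kq: "k' + q < l" using k by (simp add: k'_def)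
    have e: "X!(st+2*(i+k')) = X!(st+2*(i+k'+q))"
      using per[OF kq] q(3) kq lY by (simp add: Y)
    have "i+k' < len" "i+k'+q < len" using q(3) kq lY by auto
    then have b1: "X!(st+2*(i+k')) \<noteq> X!(st+2*(i+k')+1)"
      and b2: "X!(st+2*(i+k'+q)) \<noteq> X!(st+2*(i+k'+q)+1)" using blk by blast+
    show "X!(st+2*i+k) = X!(st+2*i+k+2*q)"
    proof (cases "even k")
      case True
      then have "k = 2*k'" by (simp add: k'_def)
      then show ?thesis using e by (simp add: algebra_simps)
    next
      case False
      then have kk: "k = 2*k'+1" by (simp add: k'_def)
      have "X!(st+2*i+k) = X!(st+2*(i+k')+1)" using kk by (simp add: algebra_simps)
      moreover have "X!(st+2*i+k+2*q) = X!(st+2*(i+k'+q)+1)" using kk by (simp add: algebra_simps)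
      ultimately show ?thesis using e b1 b2 by auto
    qed
  qed (use q len lY in auto)
qed

fun perk :: "bool list \<Rightarrow> nat \<Rightarrow> nat \<Rightarrow> nat \<Rightarrow> bool" where
  "perk xs i q 0 = True"
| "perk xs i q (Suc n) = (xs!(i+n) = xs!(i+n+q) \<and> perk xs i q n)"

fun exi :: "bool list \<Rightarrow> nat \<Rightarrow> nat \<Rightarrow> nat \<Rightarrow> bool" where
  "exi xs q l 0 = False"
| "exi xs q l (Suc i) = ((i + l \<le> length xs \<and> perk xs i q (l - q)) \<or> exi xs q l i)"

lemma perk_num: "perk xs i q (numeral m) = (xs!(i + pred_numeral m) = xs!(i + pred_numeral m + q) \<and> perk xs i q (pred_numeral m))"
  by (simp only: numeral_eq_Suc perk.simps)

lemma exi_num: "exi xs q l (numeral m) = ((pred_numeral m + l \<le> length xs \<and> perk xs (pred_numeral m) q (l - q)) \<or> exi xs q l (pred_numeral m))"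
  by (simp only: numeral_eq_Suc exi.simps)

lemma perk_iff: "perk xs i q n \<longleftrightarrow> (\<forall>k<n. xs!(i+k) = xs!(i+k+q))"
  by (induction n) (auto simp: less_Suc_eq)

lemma exi_bad: "exi xs q l n \<Longrightarrow> 0 < q \<Longrightarrow> 7*q \<le> 3*l \<Longrightarrow> badI xs"
proof (induction n)
  case 0 then show ?case by simp
next
  case (Suc n)
  show ?case
  proof (cases "exi xs q l n")
    case True then show ?thesis using Suc by blast
  next
    case False
    then have h: "n + l \<le> length xs" "perk xs n q (l - q)" using Suc.prems by auto
    show ?thesis
      by (rule badI_intro[of q l n]) (use h Suc.prems in \<open>auto simp: perk_iff\<close>)
  qed
qed



lemma base4_list: "badI [x,a,b,c,d,a,b,c,d,a,y]"
proof -
  have "exi [x,a,b,c,d,a,b,c,d,a,y] 1 3 11 \<or> exi [x,a,b,c,d,a,b,c,d,a,y] 2 5 11 \<or>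
        exi [x,a,b,c,d,a,b,c,d,a,y] 3 7 11 \<or> exi [x,a,b,c,d,a,b,c,d,a,y] 4 10 11"
    by (cases x; cases a; cases b; cases c; cases d; cases y; simp add: perk_num exi_num)
  moreover have "(7::nat)*1 \<le> 3*3" "(7::nat)*2 \<le> 3*5" "(7::nat)*3 \<le> 3*7" "(7::nat)*4 \<le> 3*10" by simp_all
  ultimately show ?thesis using exi_bad by (meson zero_less_numeral zero_less_one)
qed



definition Pp :: "nat \<Rightarrow> bool" where
  "Pp p \<longleftrightarrow> (\<forall>X m. \<not> badI X \<longrightarrow> p - 3 \<le> m \<longrightarrow> m + 3*p - 2 \<le> length X \<longrightarrow>
      (\<forall>k\<le>p. X!(m+k) = X!(m+p+k)) \<longrightarrow> False)"

lemma shift_bad: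
  assumes "off + length zs \<le> length X" "\<And>k. k < length zs \<Longrightarrow> zs!k = X!(off+k)" "badI zs"
  shows "badI X"
proof -
  obtain i l q where q: "0 < q" "7*q \<le> 3*l" "i + l \<le> length zs"
     and per: "\<And>k. k + q < l \<Longrightarrow> zs!(i+k) = zs!(i+k+q)"
    using assms(3) unfolding badI_def by blast
  show ?thesis
  proof (rule badI_intro[of q l "off+i"])
    fix k assume k: "k + q < l"
    have "zs!(i+k) = X!(off+(i+k))" "zs!(i+k+q) = X!(off+(i+k+q))" using assms(2) k q by auto
    then show "X!(off+i+k) = X!(off+i+k+q)" using per[OF k] by (simp add: add.assoc)
  qed (use q assms(1) in auto)
qed

lemma P3: "Pp 3"
  unfolding Pp_def
proof (intro allI impI)
  fix X m assume nb: "\<not> badI X" and h: "3 - 3 \<le> m" "m + 3*3 - 2 \<le> length X" "\<forall>k\<le>3. X!(m+k) = X!(m+3+k)"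
  have "badI X"
  proof (rule badI_intro[of 3 7 m])
    fix k :: nat assume "k + 3 < 7"
    then show "X!(m+k) = X!(m+k+3)" using h(3) by (simp add: add.assoc add.commute)
  qed (use h in auto)
  then show False using nb by simp
qed

lemma P4: "Pp 4"
  unfolding Pp_def
proof (intro allI impI)
  fix X m assume nb: "\<not> badI X" and h: "4 - 3 \<le> m" "m + 3*4 - 2 \<le> length X" "\<forall>k\<le>4. X!(m+k) = X!(m+4+k)"
  define g where "g k = X!(m-1+k)" for k
  have gk: "g (k+1) = g (k+5)" if "k \<le> 4" for k
  proof -
    have "m-1+(k+1) = m+k" "m-1+(k+5) = m+4+k" using h(1) by simp_all
    then show ?thesis unfolding g_def using h(3)[rule_format, OF that] by metis
  qed
  have g1: "g 5 = g 1" using gk[of 0] by (simp add: numeral_eq_Suc)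
  have g2: "g 6 = g 2" using gk[of 1] by (simp add: numeral_eq_Suc)
  have g3: "g 7 = g 3" using gk[of 2] by (simp add: numeral_eq_Suc)
  have g4: "g 8 = g 4" using gk[of 3] by (simp add: numeral_eq_Suc)
  have g5: "g 9 = g 1" using gk[of 4] g1 by (simp add: numeral_eq_Suc)
  define zs where "zs = map g [0..<11]"
  have "zs = [g 0, g 1, g 2, g 3, g 4, g 5, g 6, g 7, g 8, g 9, g 10]"
    unfolding zs_def by (simp add: numeral_eq_Suc upt_conv_Cons)
  then have "zs = [g 0, g 1, g 2, g 3, g 4, g 1, g 2, g 3, g 4, g 1, g 10]"
    using g1 g2 g3 g4 g5 by simp
  then have "badI zs" using base4_list by simp
  moreover have "zs!k = X!(m-1+k)" if "k < length zs" for k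
    using that by (simp add: zs_def g_def)
  moreover have "m-1 + length zs \<le> length X" using h(1,2) by (simp add: zs_def)
  ultimately have "badI X" using shift_bad by blast
  then show False using nb by simp
qed




lemma step:
  assumes P: "Pp p" and p3: "3 \<le> p"
  shows "Pp (2*p)"
  unfolding Pp_def
proof (intro allI impI)
  fix X m assume nb: "\<not> badI X" and hm: "2*p - 3 \<le> m" and hl: "m + 3*(2*p) - 2 \<le> length X"
    and sq: "\<forall>k\<le>2*p. X!(m+k) = X!(m+2*p+k)"
  define n where "n = length X"
  have hl': "m + 6*p - 2 \<le> n" using hl by (simp add: n_def)
  have m3: "3 \<le> m" using hm p3 by linarith
  have Puse: "\<And>Y m'. \<not> badI Y \<Longrightarrow> p - 3 \<le> m' \<Longrightarrow> m' + 3*p - 2 \<le> length Y \<Longrightarrow>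
      (\<forall>k\<le>p. Y!(m'+k) = Y!(m'+p+k)) \<Longrightarrow> False"
    using P unfolding Pp_def by blast
  show False
  proof (cases "\<exists>j. 1 \<le> j \<and> j+3 \<le> n \<and> X!j = X!(j+1) \<and> even j = even m")
    case False
    define l1 where "l1 = (m-1) div 2"
    define st where "st = m - 2*l1"
    define len where "len = (n-1-st) div 2"
    have a1: "2*l1 \<le> m - 1" "m - 2 \<le> 2*l1" unfolding l1_def by presburger+
    have st1: "1 \<le> st" "st + 2*l1 = m" using a1 m3 by (simp_all add: st_def)
    have a2: "2*len \<le> n-1-st" "n-1-st \<le> 2*len + 1" unfolding len_def by presburger+
    have stm: "even st = even m" using st1(2) by (metis dvd_add_left_iff dvd_triv_left)
    have blk: "X!(st+2*k) \<noteq> X!(st+2*k+1)" if "k < len" for k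
    proof
      assume e: "X!(st+2*k) = X!(st+2*k+1)"
      have "1 \<le> st+2*k" "st+2*k+3 \<le> n" using st1 a2 that by linarith+
      moreover have "even (st+2*k) = even m" using stm by simp
      ultimately show False using False e by blast
    qed
    define Y where "Y = map (\<lambda>k. X!(st+2*k)) [0..<len]"
    have s1: "st + 1 \<le> n" using st1 hl' p3 by linarith
    have lenX: "st + 2*len \<le> length X" using a2(1) s1 n_def by linarith
    have nbY: "\<not> badI Y" using transfer_bad[OF Y_def lenX blk] nb by blast
    have lY: "length Y = len" by (simp add: Y_def)
    show False
    proof (rule Puse[OF nbY, of l1])
      show "p - 3 \<le> l1" using a1 hm by linarith
      show "l1 + 3*p - 2 \<le> length Y" using lY a1 a2 st1 hl' p3 by linarith
      show "\<forall>k\<le>p. Y!(l1+k) = Y!(l1+p+k)"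
      proof (intro allI impI)
        fix k assume k: "k \<le> p"
        have i1: "l1 + k < len" "l1+p+k < len" using k a1 a2 st1 hl' p3 by linarith+
        have "Y!(l1+k) = X!(st+2*(l1+k))" using i1 by (simp add: Y_def)
        moreover have "st+2*(l1+k) = m+2*k" using st1 by simp
        moreover have "Y!(l1+p+k) = X!(st+2*(l1+p+k))" using i1 by (simp add: Y_def)
        moreover have "st+2*(l1+p+k) = m+2*p+2*k" using st1 by simp
        moreover have "X!(m+2*k) = X!(m+2*p+2*k)" using sq k by simp
        ultimately show "Y!(l1+k) = Y!(l1+p+k)" by metis
      qed
    qed
  next
    case True
    then obtain j0 where j0: "1 \<le> j0" "j0+3 \<le> n" "X!j0 = X!(j0+1)" "even j0 = even m" by blast
    have allp: "even j = even m" if "1 \<le> j" "j+3 \<le> n" "X!j = X!(j+1)" for j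
    proof -
      consider "j = j0" | "j < j0" | "j0 < j" by linarith
      then show ?thesis
      proof cases
        case 1 then show ?thesis using j0 by simp
      next
        case 2
        have "even (j0 - j)" using parity[OF nb, of j j0] that j0 2 n_def by simp
        moreover have "j0 = j + (j0 - j)" using 2 by simp
        ultimately show ?thesis using j0(4) by (metis even_add)
      next
        case 3
        have "even (j - j0)" using parity[OF nb, of j0 j] that j0 3 n_def by simp
        moreover have "j = j0 + (j - j0)" using 3 by simp
        ultimately show ?thesis using j0(4) by (metis even_add)
      qed
    qed
    define l2 where "l2 = (m-2) div 2"
    define st where "st = m - 1 - 2*l2"
    define len where "len = (n-1-st) div 2"
    have a1: "2*l2 \<le> m - 2" "m - 3 \<le> 2*l2" unfolding l2_def by presburger+
    have st1: "1 \<le> st" "st + 2*l2 + 1 = m" using a1 m3 by (simp_all add: st_def)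
    have a2: "2*len \<le> n-1-st" "n-1-st \<le> 2*len + 1" unfolding len_def by presburger+
    have stm: "even st \<noteq> even m" using st1(2) by (metis dvd_add_left_iff dvd_triv_left even_add odd_one)
    have blk: "X!(st+2*k) \<noteq> X!(st+2*k+1)" if "k < len" for k
    proof
      assume e: "X!(st+2*k) = X!(st+2*k+1)"
      have "1 \<le> st+2*k" "st+2*k+3 \<le> n" using st1 a2 that by linarith+
      then have "even (st+2*k) = even m" using allp e by blast
      then show False using stm by simp
    qed
    define Y where "Y = map (\<lambda>k. X!(st+2*k)) [0..<len]"
    have s1: "st + 1 \<le> n" using st1 hl' p3 by linarith
    have lenX: "st + 2*len \<le> length X" using a2(1) s1 n_def by linarith
    have nbY: "\<not> badI Y" using transfer_bad[OF Y_def lenX blk] nb by blast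
    have lY: "length Y = len" by (simp add: Y_def)
    show False
    proof (rule Puse[OF nbY, of l2])
      show "p - 3 \<le> l2" using a1 hm by linarith
      show "l2 + 3*p - 2 \<le> length Y" using lY a1 a2 st1 hl' p3 by linarith
      show "\<forall>k\<le>p. Y!(l2+k) = Y!(l2+p+k)"
      proof (intro allI impI)
        fix k assume k: "k \<le> p"
        have i1: "l2 + k < len" "l2+p+k < len" using k a1 a2 st1 hl' p3 by linarith+
        have "Y!(l2+k) = X!(st+2*(l2+k))" using i1 by (simp add: Y_def)
        moreover have "st+2*(l2+k) = m-1+2*k" using st1 by simp
        ultimately have y1: "Y!(l2+k) = X!(m-1+2*k)" by metis
        have "Y!(l2+p+k) = X!(st+2*(l2+p+k))" using i1 by (simp add: Y_def)
        moreover have "st+2*(l2+p+k) = m-1+2*p+2*k" using st1 by simp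
        ultimately have y2: "Y!(l2+p+k) = X!(m-1+2*p+2*k)" by metis
        show "Y!(l2+k) = Y!(l2+p+k)"
        proof (cases k)
          case 0
          have "l2 < len" "l2+p < len" using i1 0 by simp_all
          then have bb: "X!(st+2*l2) \<noteq> X!(st+2*l2+1)" "X!(st+2*(l2+p)) \<noteq> X!(st+2*(l2+p)+1)" using blk by blast+
          have "st+2*l2 = m-1" "st+2*l2+1 = m" "st+2*(l2+p) = m-1+2*p" "st+2*(l2+p)+1 = m+2*p" using st1 by simp_all
          then have b1: "X!(m-1) \<noteq> X!m" and b2: "X!(m-1+2*p) \<noteq> X!(m+2*p)" using bb by metis+
          have "X!m = X!(m+2*p)" using sq[rule_format, of 0] by simp
          then have "X!(m-1) = X!(m-1+2*p)" using b1 b2 by blast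
          then show ?thesis using y1 y2 0 by simp
        next
          case (Suc k')
          have "2*k'+1 \<le> 2*p" using k Suc by simp
          then have "X!(m+(2*k'+1)) = X!(m+2*p+(2*k'+1))" using sq by blast
          moreover have "m-1+2*k = m+(2*k'+1)" "m-1+2*p+2*k = m+2*p+(2*k'+1)" using Suc m3 by simp_all
          ultimately show ?thesis using y1 y2 by metis
        qed
      qed
    qed
  qed
qed

lemma allP: "Pp (3*2^k) \<and> Pp (4*2^k)"
proof (induction k)
  case 0 then show ?case using P3 P4 by simp
next
  case (Suc k)
  have "1 \<le> (2::nat)^k" by simp
  then have "3 \<le> 3*(2::nat)^k" "3 \<le> 4*(2::nat)^k" by linarith+
  then have "Pp (2*(3*2^k))" "Pp (2*(4*2^k))" using step Suc by blast+
  then show ?case by (simp add: algebra_simps)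
qed




theorem lemma7:
  fixes w s :: "bool list" and a :: bool and i j :: nat
  assumes "i > 0" and "j > 0"
    and "power_free (7/3) w" and "power_free (7/3) s"
    and "length w = 2 ^ (i + 1) - 1 \<or> length w = 3 * 2 ^ i - 1"
    and "length s = 2 ^ (j + 1) - 1 \<or> length s = 3 * 2 ^ j - 1"
    and "length s \<ge> length w"
  shows "\<not> power_free (7/3) (s @ [a] @ w @ [a] @ w @ [a] @ s)"
proof
  define X where "X = s @ [a] @ w @ [a] @ w @ [a] @ s"
  assume "power_free (7/3) (s @ [a] @ w @ [a] @ w @ [a] @ s)"
  then have nb: "\<not> badI X" using badI_not_free unfolding X_def by blast
  define p where "p = length w + 1"
  obtain i' where ii: "i = Suc i'" using assms(1) by (cases i) auto
  have "p = 4 * 2^i' \<or> p = 3 * 2^i"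
  proof -
    have "(1::nat) \<le> 2^(i+1)" "(1::nat) \<le> 3*2^i" by simp_all
    moreover have "(2::nat)^(i+1) = 4*2^i'" using ii by simp
    ultimately show ?thesis using assms(5) unfolding p_def by auto
  qed
  then have P: "Pp p" using allP by blast
  have lX: "length X = 2 * length s + 2 * p + 1" by (simp add: X_def p_def)
  have sq: "\<forall>k\<le>p. X!(length s+k) = X!(length s+p+k)"
  proof (intro allI impI)
    fix k assume k: "k \<le> p"
    have e1: "X!(length s + k) = ((a#w) @ (a#w) @ [a] @ s) ! k"
      unfolding X_def by (simp add: nth_append)
    have e2: "X!(length s + p + k) = ((a#w) @ [a] @ s) ! k"
    proof -
      have "X = (s @ (a#w)) @ ((a#w) @ [a] @ s)" by (simp add: X_def)
      moreover have "length (s @ (a#w)) = length s + p" by (simp add: p_def)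
      ultimately show ?thesis by (metis nth_append_length_plus)
    qed
    show "X!(length s+k) = X!(length s+p+k)"
    proof (cases "k < p")
      case True
      then have kk: "k < length (a#w)" by (simp add: p_def)
      have "((a#w) @ (a#w) @ [a] @ s) ! k = (a#w)!k" by (rule nth_append_left[OF kk])
      moreover have "((a#w) @ [a] @ s) ! k = (a#w)!k" by (rule nth_append_left[OF kk])
      ultimately show ?thesis using e1 e2 by metis
    next
      case False
      then have "k = length (a#w)" using k by (simp add: p_def)
      then have "((a#w) @ (a#w) @ [a] @ s) ! k = a" "((a#w) @ [a] @ s) ! k = a"
        by (metis nth_append_length_plus add_0_right nth_Cons_0 append_Cons)+
      then show ?thesis using e1 e2 by metis
    qed
  qed
  show False
    using P unfolding Pp_def
  proof (elim allE impE)
    show "\<not> badI X" by (rule nb)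
    show "p - 3 \<le> length s" using assms(7) by (simp add: p_def)
    show "length s + 3*p - 2 \<le> length X" using lX assms(7) by (simp add: p_def)
    show "\<forall>k\<le>p. X!(length s+k) = X!(length s+p+k)" by (rule sq)
  qed
qed


end
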